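(* In the setting of the context, for every integer $m\ge 0$, \[ \mathbb{E}\big[M_m(A,N)^2\big]-\big(\mathbb{E}[M_m(A,N)]\big)^2 \;=\; O_m\!\left(\frac1N\right)\qquad(N\to\infty), \] in particular the variance of $M_m(A,N)$ tends to $0$ as $N\to\infty$.
   Context: Let $p$ be a probability density on $\mathbb{R}$ with mean $0$, variance $1$ and finite moments of all orders. For $N\ge 1$, let $b_1,\dots,b_{N-1}$ be independent random variables with density $p$, set $b_0=0$, and let $A=A_N$ be the $N\times N$ real symmetric Toeplitz matrix with entries $a_{ij}=b_{|i-j|}$ ($1\le i,j\le N$). Let $\lambda_1(A),\dots,\lambda_N(A)$ be its eigenvalues. For an integer $k\ge 0$ define $M_k(A,N)=N^{-(k/2+1)}\sum_{i=1}^N\lambda_i(A)^k = N^{-(k/2+1)}\,\mathrm{Trace}(A^k)$, and $M_k(N)=\mathbb{E}[M_k(A,N)]$, the expectation over the random entries. *)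

theory Defs
  imports "HOL-Probability.Probability" "Jordan_Normal_Form.Matrix" "HOL-Library.Landau_Symbols"
begin

definition entry_dist :: "(real \<Rightarrow> real) \<Rightarrow> real measure" where
  "entry_dist p = density lborel (\<lambda>x. ennreal (p x))"

definition entries_space :: "(real \<Rightarrow> real) \<Rightarrow> nat \<Rightarrow> (nat \<Rightarrow> real) measure" where
  "entries_space p N = PiM {1..<N} (\<lambda>_. entry_dist p)"

text \<open>The N x N real symmetric Toeplitz matrix a_ij = b_|i-j| with b_0 = 0
  (indices 0..N-1 here; |i-j| is unaffected by the shift).\<close>
definition toeplitz_mat :: "nat \<Rightarrow> (nat \<Rightarrow> real) \<Rightarrow> real mat" where
  "toeplitz_mat N b = Matrix.mat N N
     (\<lambda>(i, j). let d = (if i \<le> j then j - i else i - j) in if d = 0 then 0 else b d)"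

definition mat_trace :: "real mat \<Rightarrow> real" where
  "mat_trace A = (\<Sum>i<dim_row A. A $$ (i, i))"

definition moment_AN :: "nat \<Rightarrow> nat \<Rightarrow> (nat \<Rightarrow> real) \<Rightarrow> real" where
  "moment_AN k N b = mat_trace (toeplitz_mat N b ^\<^sub>m k) / real N powr (real k / 2 + 1)"

definition expect_entries :: "(real \<Rightarrow> real) \<Rightarrow> nat \<Rightarrow> ((nat \<Rightarrow> real) \<Rightarrow> real) \<Rightarrow> real" where
  "expect_entries p N f = integral\<^sup>L (entries_space p N) f"

end

theory Submission
  imports Defs
begin

definition dd :: "nat \<Rightarrow> nat \<Rightarrow> nat" where "dd i j = (if i \<le> j then j - i else i - j)"
definition bb :: "(nat \<Rightarrow> real) \<Rightarrow> nat \<Rightarrow> real" where "bb b d = (if d = 0 then 0 else b d)"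

lemma toeplitz_index: "i < N \<Longrightarrow> j < N \<Longrightarrow> toeplitz_mat N b $$ (i,j) = bb b (dd i j)"
  by (simp add: toeplitz_mat_def bb_def dd_def Let_def)

lemma toeplitz_carrier: "toeplitz_mat N b \<in> carrier_mat N N"
  by (simp add: toeplitz_mat_def)

lemma pow_path:
  fixes A :: "real mat"
  assumes A: "A \<in> carrier_mat N N" and k: "k \<ge> 1" and i: "i < N" and j: "j < N"
  shows "(A ^\<^sub>m k) $$ (i,j) = (\<Sum>p\<in>PiE {..<k} (\<lambda>_. {..<N}).
     (if p 0 = i then \<Prod>t<k. A $$ (p t, if Suc t < k then p (Suc t) else j) else 0))"
  using k j
proof (induction k arbitrary: j rule: nat_induct_at_least)
  case base
  have "(A ^\<^sub>m 1) $$ (i,j) = A $$ (i,j)" using A by simp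
  also have "\<dots> = (\<Sum>l<N. if l = i then A $$ (l, j) else 0)"
    using i by (simp add: sum.delta)
  also have "\<dots> = (\<Sum>p\<in>PiE {..<1} (\<lambda>_. {..<N}). (if p 0 = i then \<Prod>t<1. A $$ (p t, if Suc t < 1 then p (Suc t) else j) else 0))"
    by (rule sum.reindex_bij_witness[of _ "\<lambda>p. p 0" "\<lambda>l. (\<lambda>t\<in>{..<1}. l)"])
       (auto simp: PiE_def extensional_def)
  finally show ?case .
next
  case (Suc k)
  have "(A ^\<^sub>m Suc k) $$ (i,j) = (\<Sum>l<N. (A ^\<^sub>m k) $$ (i,l) * A $$ (l,j))"
    using A i Suc.prems by (simp add: scalar_prod_def lessThan_atLeast0)
  also have "\<dots> = (\<Sum>l<N. \<Sum>p\<in>PiE {..<k} (\<lambda>_. {..<N}).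
     (if p 0 = i then (\<Prod>t<k. A $$ (p t, if Suc t < k then p (Suc t) else l)) else 0) * A $$ (l,j))"
    using Suc.IH Suc.prems by (simp add: sum_distrib_right)
  also have "\<dots> = (\<Sum>l<N. \<Sum>p\<in>PiE {..<k} (\<lambda>_. {..<N}).
     (if p 0 = i then (\<Prod>t<k. A $$ (p t, if Suc t < k then p (Suc t) else l)) * A $$ (l,j) else 0))"
    by (intro sum.cong refl) simp
  also have "\<dots> = (\<Sum>(l,p)\<in>{..<N} \<times> PiE {..<k} (\<lambda>_. {..<N}).
     (if p 0 = i then (\<Prod>t<k. A $$ (p t, if Suc t < k then p (Suc t) else l)) * A $$ (l,j) else 0))"
    by (simp add: sum.cartesian_product)
  also have "\<dots> = (\<Sum>q\<in>PiE {..<Suc k} (\<lambda>_. {..<N}).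
     (if q 0 = i then \<Prod>t<Suc k. A $$ (q t, if Suc t < Suc k then q (Suc t) else j) else 0))"
  proof (rule sym, rule sum.reindex_bij_witness[of _ "\<lambda>(l,p). p(k := l)" "\<lambda>q. (q k, restrict q {..<k})"])
    fix q assume q: "q \<in> PiE {..<Suc k} (\<lambda>_. {..<N})"
    have q0: "restrict q {..<k} 0 = q 0" using Suc.hyps by auto
    have "(\<Prod>t<Suc k. A $$ (q t, if Suc t < Suc k then q (Suc t) else j))
       = (\<Prod>t<k. A $$ (q t, if Suc t < Suc k then q (Suc t) else j)) * A $$ (q k, j)"
      by simp
    also have "(\<Prod>t<k. A $$ (q t, if Suc t < Suc k then q (Suc t) else j))
       = (\<Prod>t<k. A $$ (restrict q {..<k} t, if Suc t < k then restrict q {..<k} (Suc t) else q k))"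
    proof (rule prod.cong)
      fix t assume "t \<in> {..<k}"
      then show "A $$ (q t, if Suc t < Suc k then q (Suc t) else j) = A $$ (restrict q {..<k} t, if Suc t < k then restrict q {..<k} (Suc t) else q k)"
      proof (cases "Suc t < k")
        case False
        then have "Suc t = k" using \<open>t \<in> {..<k}\<close> by auto
        then show ?thesis by auto
      qed auto
    qed simp
    finally have eq: "(\<Prod>t<Suc k. A $$ (q t, if Suc t < Suc k then q (Suc t) else j)) = (\<Prod>t<k. A $$ (restrict q {..<k} t, if Suc t < k then restrict q {..<k} (Suc t) else q k)) * A $$ (q k, j)" .
    show "(case (q k, restrict q {..<k}) of (l, p) \<Rightarrow>
       if p 0 = i then (\<Prod>t<k. A $$ (p t, if Suc t < k then p (Suc t) else l)) * A $$ (l, j) else 0)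
     = (if q 0 = i then \<Prod>t<Suc k. A $$ (q t, if Suc t < Suc k then q (Suc t) else j) else 0)"
      unfolding prod.case q0 eq by (rule refl)
  qed (use Suc.hyps in \<open>auto simp: PiE_def extensional_def Pi_def\<close>)
  finally show ?case .
qed

definition W :: "nat \<Rightarrow> nat \<Rightarrow> (nat \<Rightarrow> nat) set" where "W N m = PiE {..<m} (\<lambda>_. {..<N})"
definition ee :: "nat \<Rightarrow> (nat \<Rightarrow> nat) \<Rightarrow> nat \<Rightarrow> nat" where "ee m u t = dd (u t) (u (Suc t mod m))"
definition XX :: "nat \<Rightarrow> (nat \<Rightarrow> real) \<Rightarrow> (nat \<Rightarrow> nat) \<Rightarrow> real" where
  "XX m b u = (\<Prod>t<m. bb b (ee m u t))"

lemma trace_walk: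
  assumes m: "m \<ge> 1"
  shows "mat_trace (toeplitz_mat N b ^\<^sub>m m) = (\<Sum>u\<in>W N m. XX m b u)"
proof -
  let ?A = "toeplitz_mat N b"
  have A: "?A \<in> carrier_mat N N" by (rule toeplitz_carrier)
  have "mat_trace (?A ^\<^sub>m m) = (\<Sum>i<N. (?A ^\<^sub>m m) $$ (i,i))"
    using A by (simp add: mat_trace_def)
  also have "\<dots> = (\<Sum>i<N. \<Sum>p\<in>W N m.
     (if p 0 = i then \<Prod>t<m. ?A $$ (p t, if Suc t < m then p (Suc t) else i) else 0))"
  proof (rule sum.cong[OF refl])
    fix i assume "i \<in> {..<N}"
    then show "(?A ^\<^sub>m m) $$ (i,i) = (\<Sum>p\<in>W N m.
     (if p 0 = i then \<Prod>t<m. ?A $$ (p t, if Suc t < m then p (Suc t) else i) else 0))"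
      using pow_path[OF A m, of i i] by (simp add: W_def)
  qed
  also have "\<dots> = (\<Sum>p\<in>W N m. \<Sum>i<N.
     (if i = p 0 then \<Prod>t<m. ?A $$ (p t, if Suc t < m then p (Suc t) else p 0) else 0))"
    by (subst sum.swap) (rule sum.cong[OF refl], rule sum.cong[OF refl], auto)
  also have "\<dots> = (\<Sum>p\<in>W N m. \<Prod>t<m. ?A $$ (p t, if Suc t < m then p (Suc t) else p 0))"
  proof (rule sum.cong[OF refl])
    fix p assume "p \<in> W N m"
    then have "p 0 \<in> {..<N}" using m unfolding W_def by (intro PiE_mem[of p "{..<m}"]) simp_all
    then have "p 0 < N" by simp
    then show "(\<Sum>i<N. (if i = p 0 then \<Prod>t<m. ?A $$ (p t, if Suc t < m then p (Suc t) else p 0) else 0))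
      = (\<Prod>t<m. ?A $$ (p t, if Suc t < m then p (Suc t) else p 0))"
      by (simp add: sum.delta)
  qed
  also have "\<dots> = (\<Sum>u\<in>W N m. XX m b u)"
  proof (rule sum.cong[OF refl])
    fix p assume p: "p \<in> W N m"
    show "(\<Prod>t<m. ?A $$ (p t, if Suc t < m then p (Suc t) else p 0)) = XX m b p"
      unfolding XX_def
    proof (rule prod.cong[OF refl])
      fix t assume t: "t \<in> {..<m}"
      have md: "Suc t mod m = (if Suc t < m then Suc t else 0)"
      proof (cases "Suc t < m")
        case False
        then have "Suc t = m" using t by simp
        then show ?thesis by simp
      qed simp
      have lt: "\<And>s. s < m \<Longrightarrow> p s < N" using PiE_mem[OF p[unfolded W_def]] by simp
      show "?A $$ (p t, if Suc t < m then p (Suc t) else p 0) = bb b (ee m p t)"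
        using t m lt[of t] lt[of "Suc t"] lt[of 0] unfolding ee_def md
        by (auto simp: toeplitz_index)
    qed
  qed
  finally show ?thesis .
qed

definition cnt :: "nat \<Rightarrow> (nat \<Rightarrow> nat) \<Rightarrow> nat \<Rightarrow> nat" where
  "cnt m u d = card {t \<in> {..<m}. ee m u t = d}"

lemma prod_group_power:
  fixes f :: "nat \<Rightarrow> 'b::comm_monoid_mult"
  assumes "finite A" "finite T" "g ` A \<subseteq> T"
  shows "(\<Prod>a\<in>A. f (g a)) = (\<Prod>y\<in>T. f y ^ card {a \<in> A. g a = y})"
proof -
  have "(\<Prod>a\<in>A. f (g a)) = (\<Prod>y\<in>T. \<Prod>a\<in>{a \<in> A. g a = y}. f (g a))"
    using prod.group[OF assms, of "\<lambda>a. f (g a)"] by simp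
  also have "\<dots> = (\<Prod>y\<in>T. f y ^ card {a \<in> A. g a = y})"
    by (intro prod.cong refl) simp
  finally show ?thesis .
qed

lemma dd_less: "i < N \<Longrightarrow> j < N \<Longrightarrow> dd i j < N"
  unfolding dd_def by (simp add: less_imp_diff_less)

lemma ee_less:
  assumes "u \<in> W N m" "t < m"
  shows "ee m u t < N"
proof -
  have "Suc t mod m < m" using assms(2) by simp
  then show ?thesis
    using PiE_mem[OF assms(1)[unfolded W_def]] assms(2) unfolding ee_def by (intro dd_less) simp_all
qed

lemma XX_cnt:
  assumes "u \<in> W N m"
  shows "XX m b u = (\<Prod>d<N. bb b d ^ cnt m u d)"
  unfolding XX_def cnt_def
  by (rule prod_group_power) (use ee_less[OF assms] in auto)

lemma XX_mult_cnt:
  assumes "u \<in> W N m" "v \<in> W N m"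
  shows "XX m b u * XX m b v = (\<Prod>d<N. bb b d ^ (cnt m u d + cnt m v d))"
  by (simp add: XX_cnt[OF assms(1)] XX_cnt[OF assms(2)] power_add prod.distrib)

lemma sum_cnt:
  assumes "u \<in> W N m"
  shows "(\<Sum>d<N. cnt m u d) = m"
proof -
  have "(\<Sum>d<N. cnt m u d) = (\<Sum>d<N. \<Sum>t\<in>{t \<in> {..<m}. ee m u t = d}. 1)"
    by (simp add: cnt_def)
  also have "\<dots> = (\<Sum>t<m. 1)"
    by (rule sum.group) (use ee_less[OF assms] in auto)
  finally show ?thesis by simp
qed

definition rot :: "nat \<Rightarrow> nat \<Rightarrow> (nat \<Rightarrow> nat) \<Rightarrow> (nat \<Rightarrow> nat)" where
  "rot m a u = (\<lambda>t\<in>{..<m}. u ((t + a) mod m))"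

lemma rot_W: "m \<ge> 1 \<Longrightarrow> u \<in> W N m \<Longrightarrow> rot m a u \<in> W N m"
  unfolding rot_def W_def restrict_PiE_iff
proof
  fix t assume "t \<in> {..<m}" "1 \<le> m" "u \<in> {..<m} \<rightarrow>\<^sub>E {..<N}"
  moreover have "(t + a) mod m \<in> {..<m}" using \<open>1 \<le> m\<close> by simp
  ultimately show "u ((t + a) mod m) \<in> {..<N}" using PiE_mem by blast
qed

lemma ee_rot:
  assumes m: "m \<ge> 1" and t: "t < m"
  shows "ee m (rot m a u) t = ee m u ((t + a) mod m)"
proof -
  have "Suc t mod m < m" using m by simp
  moreover have "(Suc t mod m + a) mod m = Suc ((t + a) mod m) mod m"
    by (simp add: mod_add_left_eq mod_Suc_eq)
  ultimately show ?thesis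
    using t unfolding ee_def rot_def by simp
qed

lemma rot_rot:
  assumes m: "m \<ge> 1" and u: "u \<in> W N m" and ab: "a + b = m"
  shows "rot m b (rot m a u) = u"
proof (rule ext)
  fix t
  show "rot m b (rot m a u) t = u t"
  proof (cases "t < m")
    case True
    have "((t + b) mod m + a) mod m = (t + m) mod m"
      using ab by (simp add: mod_add_left_eq add.assoc add.commute[of b a])
    also have "\<dots> = t" using True by simp
    finally show ?thesis using True m unfolding rot_def by simp
  next
    case False
    then show ?thesis using u unfolding rot_def W_def by (auto simp: PiE_def extensional_def)
  qed
qed

lemma cnt_rot:
  assumes m: "m \<ge> 1" and a: "a < m"
  shows "cnt m (rot m a u) d = cnt m u d"
proof -
  have "cnt m (rot m a u) d = card {t \<in> {..<m}. ee m u ((t + a) mod m) = d}"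
    unfolding cnt_def using ee_rot[OF m] by (intro arg_cong[where f=card]) auto
  also have "\<dots> = card ((\<lambda>t. (t + a) mod m) ` {t \<in> {..<m}. ee m u ((t + a) mod m) = d})"
  proof (rule card_image[symmetric], rule inj_onI)
    fix x y assume x: "x \<in> {t \<in> {..<m}. ee m u ((t + a) mod m) = d}" and y: "y \<in> {t \<in> {..<m}. ee m u ((t + a) mod m) = d}"
      and eq: "(x + a) mod m = (y + a) mod m"
    have "((x + a) mod m + (m - a)) mod m = ((y + a) mod m + (m - a)) mod m" using eq by simp
    then have "(x + a + (m - a)) mod m = (y + a + (m - a)) mod m" by (simp add: mod_add_left_eq)
    then have "(x + m) mod m = (y + m) mod m" using a by simp
    then show "x = y" using x y by simp
  qed
  also have "(\<lambda>t. (t + a) mod m) ` {t \<in> {..<m}. ee m u ((t + a) mod m) = d} = {s \<in> {..<m}. ee m u s = d}"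
  proof
    show "(\<lambda>t. (t + a) mod m) ` {t \<in> {..<m}. ee m u ((t + a) mod m) = d} \<subseteq> {s \<in> {..<m}. ee m u s = d}"
      using m by auto
    show "{s \<in> {..<m}. ee m u s = d} \<subseteq> (\<lambda>t. (t + a) mod m) ` {t \<in> {..<m}. ee m u ((t + a) mod m) = d}"
    proof
      fix s assume s: "s \<in> {s \<in> {..<m}. ee m u s = d}"
      let ?t = "(s + (m - a)) mod m"
      have "(?t + a) mod m = (s + (m - a) + a) mod m" by (simp add: mod_add_left_eq)
      also have "\<dots> = (s + m) mod m" using a by simp
      also have "\<dots> = s" using s by simp
      finally have "(?t + a) mod m = s" .
      moreover have "?t < m" using m by simp
      ultimately show "s \<in> (\<lambda>t. (t + a) mod m) ` {t \<in> {..<m}. ee m u ((t + a) mod m) = d}"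
        using s by (intro image_eqI[of _ _ ?t]) auto
    qed
  qed
  finally show ?thesis unfolding cnt_def .
qed

definition comb :: "nat \<Rightarrow> (nat \<Rightarrow> nat) \<Rightarrow> (nat \<Rightarrow> nat) \<Rightarrow> nat \<Rightarrow> nat" where
  "comb m u v t = (if t < m then u t else v (t - m))"

definition nx :: "nat \<Rightarrow> nat \<Rightarrow> nat" where
  "nx m j = (if j = m - 1 then 0 else if j = 2*m - 1 then m else Suc j)"

definition sx :: "nat \<Rightarrow> (nat \<Rightarrow> nat) \<Rightarrow> nat \<Rightarrow> nat" where
  "sx m x j = dd (x j) (x (nx m j))"

lemma sx_comb1:
  assumes m: "m \<ge> 1" and t: "t < m"
  shows "sx m (comb m u v) t = ee m u t"
proof (cases "t = m - 1")
  case True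
  then have "Suc t = m" using m by simp
  then show ?thesis using True m unfolding sx_def ee_def nx_def comb_def by simp
next
  case False
  then have "Suc t < m" using t by simp
  moreover have "t \<noteq> 2*m - 1" using t by simp
  ultimately show ?thesis using False t unfolding sx_def ee_def nx_def comb_def by simp
qed

lemma sx_comb2:
  assumes m: "m \<ge> 1" and t: "t < m"
  shows "sx m (comb m u v) (m + t) = ee m v t"
proof (cases "t = m - 1")
  case True
  then have "Suc t = m" "m + t = 2*m - 1" "m + t \<noteq> m - 1" "\<not> 2*m - 1 < m" "2*m - 1 - m = m - 1" using m by simp_all
  then show ?thesis using True m unfolding sx_def ee_def nx_def comb_def by simp
next
  case False
  then have "Suc t < m" using t by simp
  moreover have "m + t \<noteq> 2*m - 1" "m + t \<noteq> m - 1" using t False m by simp_all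
  ultimately show ?thesis using False t unfolding sx_def ee_def nx_def comb_def by simp
qed

lemma mult_comb:
  assumes m: "m \<ge> 1"
  shows "card {t \<in> {..<2*m}. sx m (comb m u v) t = d} = cnt m u d + cnt m v d"
proof -
  let ?x = "comb m u v"
  have split: "{t \<in> {..<2*m}. sx m ?x t = d} = {t \<in> {..<m}. ee m u t = d} \<union> (\<lambda>t. m + t) ` {t \<in> {..<m}. ee m v t = d}"
  proof
    show "{t \<in> {..<2*m}. sx m ?x t = d} \<subseteq> {t \<in> {..<m}. ee m u t = d} \<union> (\<lambda>t. m + t) ` {t \<in> {..<m}. ee m v t = d}"
    proof
      fix t assume t: "t \<in> {t \<in> {..<2*m}. sx m ?x t = d}"
      show "t \<in> {t \<in> {..<m}. ee m u t = d} \<union> (\<lambda>t. m + t) ` {t \<in> {..<m}. ee m v t = d}"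
      proof (cases "t < m")
        case True
        then show ?thesis using sx_comb1[OF m True, of u v] t by auto
      next
        case False
        then have s: "t = m + (t - m)" "t - m < m" using t by auto
        then have "sx m ?x (m + (t - m)) = d" using t by simp
        then have "ee m v (t - m) = d" using sx_comb2[OF m s(2), of u v] by simp
        then show ?thesis using s by (intro UnI2 image_eqI[of _ _ "t - m"]) auto
      qed
    qed
    show "{t \<in> {..<m}. ee m u t = d} \<union> (\<lambda>t. m + t) ` {t \<in> {..<m}. ee m v t = d} \<subseteq> {t \<in> {..<2*m}. sx m ?x t = d}"
      using sx_comb1[OF m, of _ u v] sx_comb2[OF m, of _ u v] by auto
  qed
  have "card {t \<in> {..<2*m}. sx m ?x t = d} = card {t \<in> {..<m}. ee m u t = d} + card ((\<lambda>t. m + t) ` {t \<in> {..<m}. ee m v t = d})"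
    unfolding split by (rule card_Un_disjoint) auto
  also have "card ((\<lambda>t. m + t) ` {t \<in> {..<m}. ee m v t = d}) = card {t \<in> {..<m}. ee m v t = d}"
    by (rule card_image) (auto simp: inj_on_def)
  finally show ?thesis unfolding cnt_def .
qed

definition stepv :: "nat \<Rightarrow> (nat \<Rightarrow> nat) \<Rightarrow> (nat \<Rightarrow> nat + nat \<times> bool) \<Rightarrow> (nat \<Rightarrow> nat) \<Rightarrow> nat \<Rightarrow> nat" where
  "stepv m vv pat f t = (if Suc t = m then vv 1 else (case pat t of Inl i \<Rightarrow> vv i
      | Inr (j, sg) \<Rightarrow> (if sg then f t + dd (f j) (f (nx m j)) else f t - dd (f j) (f (nx m j)))))"

primrec decf :: "nat \<Rightarrow> (nat \<Rightarrow> nat) \<Rightarrow> (nat \<Rightarrow> nat + nat \<times> bool) \<Rightarrow> nat \<Rightarrow> nat \<Rightarrow> nat" where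
  "decf m vv pat 0 = (\<lambda>_. vv 0)"
| "decf m vv pat (Suc t) = (decf m vv pat t)(Suc t := stepv m vv pat (decf m vv pat t) t)"

definition decode :: "nat \<Rightarrow> (nat \<Rightarrow> nat) \<Rightarrow> (nat \<Rightarrow> nat + nat \<times> bool) \<Rightarrow> (nat \<Rightarrow> nat) \<times> (nat \<Rightarrow> nat)" where
  "decode m vv pat = (restrict (decf m vv pat (2*m - 1)) {..<m}, restrict (\<lambda>t. decf m vv pat (2*m - 1) (t + m)) {..<m})"

definition Vecs :: "nat \<Rightarrow> nat \<Rightarrow> (nat \<Rightarrow> nat) set" where
  "Vecs N m = PiE {..<Suc m} (\<lambda>_. {..<N})"

definition Pats :: "nat \<Rightarrow> (nat \<Rightarrow> nat + nat \<times> bool) set" where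
  "Pats m = PiE {..<2*m} (\<lambda>_. Inl ` {..<Suc m} \<union> Inr ` ({..<2*m} \<times> UNIV))"

definition G0 :: "nat \<Rightarrow> nat \<Rightarrow> ((nat \<Rightarrow> nat) \<times> (nat \<Rightarrow> nat)) set" where
  "G0 N m = {(u,v). u \<in> W N m \<and> v \<in> W N m \<and> (\<forall>d. cnt m u d + cnt m v d \<noteq> 1) \<and> ee m u (m - 1) = ee m v (m - 1)}"

lemma decode_surj:
  assumes m: "m \<ge> 1" and uv: "(u, v) \<in> G0 N m"
  shows "(u, v) \<in> (\<lambda>(vv, pat). decode m vv pat) ` (Vecs N m \<times> Pats m)"
proof -
  have u: "u \<in> W N m" and v: "v \<in> W N m" and ne1: "\<And>d. cnt m u d + cnt m v d \<noteq> 1"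
    and cl: "ee m u (m - 1) = ee m v (m - 1)"
    using uv by (auto simp: G0_def)
  define x where "x = comb m u v"
  have ult: "\<And>t. t < m \<Longrightarrow> u t < N" using PiE_mem[OF u[unfolded W_def]] by simp
  have vlt: "\<And>t. t < m \<Longrightarrow> v t < N" using PiE_mem[OF v[unfolded W_def]] by simp
  have xlt: "x t < N" if "t < 2*m" for t
    using ult[of t] vlt[of "t - m"] that unfolding x_def comb_def by auto
  define S where "S = {t. t < 2*m \<and> t \<noteq> m - 1 \<and> t \<noteq> 2*m - 1}"
  define Av where "Av t = {j. (j < t \<and> j \<in> S) \<or> (j = m - 1 \<and> m \<le> t)}" for t
  define Nw where "Nw = {t \<in> S. \<not> (\<exists>j\<in>Av t. sx m x j = sx m x t)}"
  have finS: "finite S" unfolding S_def by simp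
  have NwS: "Nw \<subseteq> S" unfolding Nw_def by auto
  have finNw: "finite Nw" using finite_subset[OF NwS finS] .
  define v0 where "v0 = sx m x (m - 1)"
  have c1: "sx m x (m - 1) = ee m u (m - 1)" unfolding x_def using sx_comb1[OF m, of "m - 1"] m by simp
  have c2: "sx m x (2*m - 1) = ee m v (m - 1)"
    using sx_comb2[OF m, of "m - 1" u v] m unfolding x_def by (simp add: mult_2)
  have c2': "sx m x (2*m - 1) = v0" using c1 c2 cl unfolding v0_def by simp
  have mult: "card {t \<in> {..<2*m}. sx m x t = d} = cnt m u d + cnt m v d" for d
    unfolding x_def by (rule mult_comb[OF m])
  let ?V = "sx m x ` S"
  have lb: "(if d = v0 then 1 else 2) \<le> card {t \<in> S. sx m x t = d}" if d: "d \<in> ?V" for d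
  proof -
    have ne: "{t \<in> S. sx m x t = d} \<noteq> {}" using d by auto
    have fin: "finite {t \<in> S. sx m x t = d}" using finS by simp
    show ?thesis
    proof (cases "d = v0")
      case True
      then show ?thesis using ne fin by (simp add: card_gt_0_iff Suc_le_eq)
    next
      case False
      have "{t \<in> S. sx m x t = d} = {t \<in> {..<2*m}. sx m x t = d}"
        using False c2' unfolding S_def v0_def by auto
      then have "card {t \<in> S. sx m x t = d} = cnt m u d + cnt m v d" using mult by simp
      moreover have "card {t \<in> S. sx m x t = d} \<noteq> 0" using ne fin by simp
      ultimately have "2 \<le> card {t \<in> S. sx m x t = d}" using ne1[of d] by linarith
      then show ?thesis using False by simp
    qed
  qed
  have sumS: "(\<Sum>d\<in>?V. card {t \<in> S. sx m x t = d}) = card S"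
  proof -
    have "(\<Sum>d\<in>?V. card {t \<in> S. sx m x t = d}) = (\<Sum>d\<in>?V. \<Sum>t\<in>{t \<in> S. sx m x t = d}. (1::nat))"
      by simp
    also have "\<dots> = (\<Sum>t\<in>S. 1)" by (rule sum.group) (use finS in auto)
    finally show ?thesis by simp
  qed
  have cardS: "card S = 2*m - 2"
  proof -
    have "S = {..<2*m} - {m - 1, 2*m - 1}" unfolding S_def by auto
    moreover have "card {m - 1, 2*m - 1} = 2" using m by simp
    moreover have "{m - 1, 2*m - 1} \<subseteq> {..<2*m}" using m by auto
    ultimately show ?thesis using card_Diff_subset[of "{m - 1, 2*m - 1}" "{..<2*m}"] by simp
  qed
  have "(\<Sum>d\<in>?V. (if d = v0 then 1 else 2::nat)) \<le> 2*m - 2"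
    using sum_mono[of ?V "\<lambda>d. (if d = v0 then 1 else 2::nat)" "\<lambda>d. card {t \<in> S. sx m x t = d}"] lb sumS cardS
    by simp
  moreover have "(\<Sum>d\<in>?V. (2::nat)) = (\<Sum>d\<in>?V. (if d = v0 then 1 else 2::nat)) + (\<Sum>d\<in>?V. (if d = v0 then 1 else 0::nat))"
  proof -
    have "(\<Sum>d\<in>?V. (2::nat)) = (\<Sum>d\<in>?V. (if d = v0 then 1 else 2::nat) + (if d = v0 then 1 else 0::nat))"
      by (rule sum.cong) auto
    also have "\<dots> = (\<Sum>d\<in>?V. (if d = v0 then 1 else 2::nat)) + (\<Sum>d\<in>?V. (if d = v0 then 1 else 0::nat))"
      by (rule sum.distrib)
    finally show ?thesis .
  qed
  moreover have "(\<Sum>d\<in>?V. (if d = v0 then 1 else 0::nat)) \<le> 1"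
    using finS by (simp add: sum.delta)
  ultimately have "2 * card ?V \<le> 2*m - 1" using m by simp
  then have cardV: "card ?V \<le> m - 1" by simp
  have inj: "inj_on (sx m x) Nw"
  proof (rule inj_onI)
    fix a b assume a: "a \<in> Nw" and b: "b \<in> Nw" and eq: "sx m x a = sx m x b"
    show "a = b"
    proof (rule ccontr)
      assume "a \<noteq> b"
      then consider "a < b" | "b < a" by linarith
      then show False
      proof cases
        case 1
        then have "a \<in> Av b" using a NwS unfolding Av_def by auto
        then show False using b eq unfolding Nw_def by auto
      next
        case 2
        then have "b \<in> Av a" using b NwS unfolding Av_def by auto
        then show False using a eq unfolding Nw_def by auto
      qed
    qed
  qed
  have cardNw: "card Nw \<le> m - 1"
  proof -
    have "card Nw = card (sx m x ` Nw)" using card_image[OF inj] by simp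
    also have "\<dots> \<le> card ?V" by (rule card_mono) (use finS NwS in auto)
    finally show ?thesis using cardV by simp
  qed
  obtain h where h: "bij_betw h Nw {0..<card Nw}" using ex_bij_betw_finite_nat[OF finNw] by blast
  have hinj: "inj_on h Nw" using h by (rule bij_betw_imp_inj_on)
  have hlt: "t \<in> Nw \<Longrightarrow> h t < card Nw" for t using h by (auto simp: bij_betw_def)
  define vv where "vv = (\<lambda>i\<in>{..<Suc m}. if i = 0 then x 0 else if i = 1 then x m
      else if i - 2 < card Nw then x (Suc (inv_into Nw h (i - 2))) else 0)"
  define pat where "pat = (\<lambda>t\<in>{..<2*m}. if t \<in> Nw then Inl (h t + 2)
      else if t \<in> S then Inr (SOME j. j \<in> Av t \<and> sx m x j = sx m x t, x t \<le> x (Suc t)) else Inl 0)"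
  have vvin: "vv \<in> Vecs N m"
    unfolding Vecs_def vv_def restrict_PiE_iff
  proof
    fix i assume i: "i \<in> {..<Suc m}"
    have inS: "Suc (inv_into Nw h (i - 2)) < 2*m" if "i - 2 < card Nw"
    proof -
      have "i - 2 \<in> h ` Nw" using that h by (auto simp: bij_betw_def)
      then have "inv_into Nw h (i - 2) \<in> Nw" by (rule inv_into_into)
      then have "inv_into Nw h (i - 2) \<in> S" using NwS by auto
      then show ?thesis unfolding S_def by auto
    qed
    show "(if i = 0 then x 0 else if i = 1 then x m
      else if i - 2 < card Nw then x (Suc (inv_into Nw h (i - 2))) else 0) \<in> {..<N}"
    proof -
      have "x 0 < N" using xlt[of 0] m by simp
      then have N0: "0 < N" by (cases N) auto
      show ?thesis using xlt[of m] m xlt inS N0 by auto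
    qed
  qed
  have Sex: "\<exists>j. j \<in> Av t \<and> sx m x j = sx m x t" if "t \<in> S" "t \<notin> Nw" for t
    using that unfolding Nw_def by auto
  have patin: "pat \<in> Pats m"
    unfolding Pats_def pat_def restrict_PiE_iff
  proof
    fix t assume t: "t \<in> {..<2*m}"
    show "(if t \<in> Nw then Inl (h t + 2)
      else if t \<in> S then Inr (SOME j. j \<in> Av t \<and> sx m x j = sx m x t, x t \<le> x (Suc t)) else Inl 0)
      \<in> Inl ` {..<Suc m} \<union> Inr ` ({..<2*m} \<times> UNIV)"
    proof (cases "t \<in> Nw")
      case True
      then show ?thesis using hlt[of t] cardNw m by auto
    next
      case False
      show ?thesis
      proof (cases "t \<in> S")
        case True
        let ?j = "SOME j. j \<in> Av t \<and> sx m x j = sx m x t"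
        have "?j \<in> Av t" using someI_ex[OF Sex[OF True False]] by blast
        then have "?j < 2*m" using True m unfolding Av_def S_def by auto
        then show ?thesis using True False by auto
      qed (use False in auto)
    qed
  qed
  have dec: "decf m vv pat k s = x s" if "k < 2*m" "s \<le> k" for k s
    using that
  proof (induction k arbitrary: s)
    case 0
    then show ?case by (simp add: vv_def)
  next
    case (Suc k)
    let ?f = "decf m vv pat k"
    have fk: "\<And>s. s \<le> k \<Longrightarrow> ?f s = x s" using Suc.IH Suc.prems by simp
    have step: "stepv m vv pat ?f k = x (Suc k)"
    proof (cases "Suc k = m")
      case True
      then show ?thesis using m by (simp add: stepv_def vv_def)
    next
      case False
      have kS: "k \<in> S" using False Suc.prems m unfolding S_def by auto
      have nxk: "nx m k = Suc k" using kS unfolding S_def nx_def by auto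
      have k2: "k < 2*m" using kS unfolding S_def by auto
      show ?thesis
      proof (cases "k \<in> Nw")
        case True
        have hk: "h k < card Nw" using hlt[OF True] .
        have "inv_into Nw h (h k) = k" using hinj True by (rule inv_into_f_f)
        moreover have "h k + 2 < Suc m" using hk cardNw m by linarith
        ultimately show ?thesis using False True k2 hk by (simp add: stepv_def pat_def vv_def)
      next
        case nN: False
        define j where "j = (SOME j. j \<in> Av k \<and> sx m x j = sx m x k)"
        have j: "j \<in> Av k" "sx m x j = sx m x k" using someI_ex[OF Sex[OF kS nN]] unfolding j_def by blast+
        have jle: "j \<le> k" and nxle: "nx m j \<le> k"
          using j(1) m unfolding Av_def S_def nx_def by auto
        have pk: "pat k = Inr (j, x k \<le> x (Suc k))" using k2 nN kS unfolding pat_def j_def by simp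
        have dlt: "dd (?f j) (?f (nx m j)) = dd (x k) (x (Suc k))"
          using fk[OF jle] fk[OF nxle] j(2) nxk unfolding sx_def by simp
        show ?thesis using False pk dlt fk[of k] unfolding stepv_def by (simp add: dd_def)
      qed
    qed
    show ?case
    proof (cases "s = Suc k")
      case True
      then show ?thesis using step by simp
    next
      case False
      then have "s \<le> k" using Suc.prems by simp
      then show ?thesis using fk False by simp
    qed
  qed
  have "decode m vv pat = (u, v)"
  proof -
    have d: "decf m vv pat (2*m - 1) s = x s" if "s \<le> 2*m - 1" for s
      using dec[OF _ that] m by simp
    have "restrict (decf m vv pat (2*m - 1)) {..<m} = u"
    proof (rule ext)
      fix t show "restrict (decf m vv pat (2*m - 1)) {..<m} t = u t"
        using d[of t] u unfolding x_def comb_def W_def by (auto simp: PiE_def extensional_def)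
    qed
    moreover have "restrict (\<lambda>t. decf m vv pat (2*m - 1) (t + m)) {..<m} = v"
    proof (rule ext)
      fix t show "restrict (\<lambda>t. decf m vv pat (2*m - 1) (t + m)) {..<m} t = v t"
        using d[of "t + m"] v unfolding x_def comb_def W_def by (auto simp: PiE_def extensional_def)
    qed
    ultimately show ?thesis unfolding decode_def by simp
  qed
  then show ?thesis using vvin patin by force
qed

definition good :: "nat \<Rightarrow> (nat \<Rightarrow> nat) \<Rightarrow> (nat \<Rightarrow> nat) \<Rightarrow> bool" where
  "good m u v \<longleftrightarrow> (\<forall>d. cnt m u d + cnt m v d \<noteq> 1) \<and> (\<exists>d. 0 < cnt m u d \<and> 0 < cnt m v d)"

lemma finite_W: "finite (W N m)" by (simp add: W_def finite_PiE)

lemma finite_Pats: "finite (Pats m)" unfolding Pats_def by (intro finite_PiE) auto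

lemma card_G0:
  assumes m: "m \<ge> 1"
  shows "card (G0 N m) \<le> N ^ Suc m * card (Pats m)"
proof -
  have fin: "finite (Vecs N m \<times> Pats m)" using finite_Pats by (simp add: Vecs_def finite_PiE)
  have "card (G0 N m) \<le> card ((\<lambda>(vv, pat). decode m vv pat) ` (Vecs N m \<times> Pats m))"
  proof (rule card_mono)
    show "finite ((\<lambda>(vv, pat). decode m vv pat) ` (Vecs N m \<times> Pats m))" using fin by simp
    show "G0 N m \<subseteq> (\<lambda>(vv, pat). decode m vv pat) ` (Vecs N m \<times> Pats m)"
      using decode_surj[OF m] by auto
  qed
  also have "\<dots> \<le> card (Vecs N m \<times> Pats m)" by (rule card_image_le[OF fin])
  also have "\<dots> = N ^ Suc m * card (Pats m)"
    by (simp add: card_cartesian_product Vecs_def card_PiE)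
  finally show ?thesis .
qed

definition GG :: "nat \<Rightarrow> nat \<Rightarrow> ((nat \<Rightarrow> nat) \<times> (nat \<Rightarrow> nat)) set" where
  "GG N m = {(u,v). u \<in> W N m \<and> v \<in> W N m \<and> good m u v}"

lemma rot_G0:
  assumes m: "m \<ge> 1" and u: "u \<in> W N m" and v: "v \<in> W N m" and g: "good m u v"
  shows "\<exists>a\<in>{..m}. \<exists>b\<in>{..m}. \<exists>u0 v0. (u0, v0) \<in> G0 N m \<and> u = rot m a u0 \<and> v = rot m b v0"
proof -
  obtain d where d: "0 < cnt m u d" "0 < cnt m v d" and ne1: "\<And>d. cnt m u d + cnt m v d \<noteq> 1"
    using g unfolding good_def by blast
  obtain c where c: "c < m" "ee m u c = d"
    using d(1) unfolding cnt_def by (metis (mono_tags, lifting) card.empty empty_Collect_eq lessThan_iff less_irrefl)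
  obtain c' where c': "c' < m" "ee m v c' = d"
    using d(2) unfolding cnt_def by (metis (mono_tags, lifting) card.empty empty_Collect_eq lessThan_iff less_irrefl)
  define a where "a = Suc c mod m"
  define a' where "a' = Suc c' mod m"
  have am: "a < m" "a' < m" using m unfolding a_def a'_def by auto
  have cl: "(m - 1 + Suc k mod m) mod m = k" if "k < m" for k
  proof -
    have "(m - 1 + Suc k mod m) mod m = (m - 1 + Suc k) mod m" by (simp add: mod_add_right_eq)
    also have "m - 1 + Suc k = k + m" using m by simp
    finally show ?thesis using that by simp
  qed
  define u0 where "u0 = rot m a u"
  define v0 where "v0 = rot m a' v"
  have u0W: "u0 \<in> W N m" unfolding u0_def by (rule rot_W[OF m u])
  have v0W: "v0 \<in> W N m" unfolding v0_def by (rule rot_W[OF m v])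
  have cu: "cnt m u0 = cnt m u" unfolding u0_def using cnt_rot[OF m am(1)] by auto
  have cv: "cnt m v0 = cnt m v" unfolding v0_def using cnt_rot[OF m am(2)] by auto
  have "ee m u0 (m - 1) = ee m u c"
    unfolding u0_def using ee_rot[OF m, of "m - 1" a u] m cl[OF c(1)] unfolding a_def by simp
  moreover have "ee m v0 (m - 1) = ee m v c'"
    unfolding v0_def using ee_rot[OF m, of "m - 1" a' v] m cl[OF c'(1)] unfolding a'_def by simp
  ultimately have "(u0, v0) \<in> G0 N m" using u0W v0W cu cv ne1 c c' unfolding G0_def by simp
  moreover have "u = rot m (m - a) u0" unfolding u0_def using rot_rot[OF m u, of a "m - a"] am by simp
  moreover have "v = rot m (m - a') v0" unfolding v0_def using rot_rot[OF m v, of a' "m - a'"] am by simp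
  ultimately show ?thesis by (intro bexI[of _ "m - a"] bexI[of _ "m - a'"]) auto
qed

lemma card_GG:
  assumes m: "m \<ge> 1"
  shows "card (GG N m) \<le> Suc m * Suc m * (N ^ Suc m * card (Pats m))"
proof -
  let ?f = "\<lambda>(a, b, (u0, v0)). (rot m a u0, rot m b v0)"
  have fin: "finite ({..m} \<times> {..m} \<times> G0 N m)"
  proof -
    have "G0 N m \<subseteq> W N m \<times> W N m" unfolding G0_def by auto
    then have "finite (G0 N m)" using finite_W by (rule finite_subset[OF _ finite_cartesian_product]) (rule finite_W)
    then show ?thesis by simp
  qed
  have "card (GG N m) \<le> card (?f ` ({..m} \<times> {..m} \<times> G0 N m))"
  proof (rule card_mono)
    show "finite (?f ` ({..m} \<times> {..m} \<times> G0 N m))" using fin by simp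
    show "GG N m \<subseteq> ?f ` ({..m} \<times> {..m} \<times> G0 N m)"
    proof
      fix uv assume "uv \<in> GG N m"
      then obtain u v where uv: "uv = (u, v)" "u \<in> W N m" "v \<in> W N m" "good m u v" unfolding GG_def by auto
      then obtain a b u0 v0 where "a \<in> {..m}" "b \<in> {..m}" "(u0, v0) \<in> G0 N m" "u = rot m a u0" "v = rot m b v0"
        using rot_G0[OF m] by meson
      then show "uv \<in> ?f ` ({..m} \<times> {..m} \<times> G0 N m)" using uv(1) by (intro image_eqI[of _ _ "(a, b, (u0, v0))"]) auto
    qed
  qed
  also have "\<dots> \<le> card ({..m} \<times> {..m} \<times> G0 N m)" by (rule card_image_le[OF fin])
  also have "\<dots> = Suc m * Suc m * card (G0 N m)" by (simp only: card_cartesian_product card_atMost mult.assoc)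
  also have "\<dots> \<le> Suc m * Suc m * (N ^ Suc m * card (Pats m))" by (rule mult_le_mono2[OF card_G0[OF m]])
  finally show ?thesis .
qed

locale ent =
  fixes p :: "real \<Rightarrow> real"
  assumes p_meas: "p \<in> borel_measurable lborel"
    and p_nonneg: "\<And>x. 0 \<le> p x"
    and p_prob: "prob_space (entry_dist p)"
    and p_moments: "\<And>k::nat. integrable lborel (\<lambda>x. x ^ k * p x)"
    and p_mean: "(\<integral>x. x * p x \<partial>lborel) = 0"
begin

definition mu :: "nat \<Rightarrow> real" where "mu k = (\<integral>x. x ^ k \<partial>entry_dist p)"

lemma integrable_pow: "integrable (entry_dist p) (\<lambda>x. x ^ k)"
  unfolding entry_dist_def
  by (subst integrable_density) (use p_meas p_nonneg p_moments[of k] in \<open>auto simp: mult.commute\<close>)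

lemma mu_lborel: "mu k = (\<integral>x. x ^ k * p x \<partial>lborel)"
  unfolding mu_def entry_dist_def
  by (subst integral_density) (use p_meas p_nonneg in \<open>auto simp: mult.commute\<close>)

lemma mu0: "mu 0 = 1"
proof -
  interpret prob_space "entry_dist p" by (rule p_prob)
  show ?thesis by (simp add: mu_def prob_space)
qed

lemma mu1: "mu 1 = 0"
  using p_mean by (simp add: mu_lborel)

lemma abs_pow_le: "k \<le> 2*n \<Longrightarrow> \<bar>(x::real) ^ k\<bar> \<le> 1 + x ^ (2*n)"
proof (cases "\<bar>x\<bar> \<le> 1")
  case True
  have "\<bar>x ^ k\<bar> \<le> 1" using True by (simp add: power_abs power_le_one)
  moreover have "0 \<le> x ^ (2*n)" by (simp add: power_mult)
  ultimately show ?thesis by linarith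
next
  case False
  assume k: "k \<le> 2*n"
  have "\<bar>x ^ k\<bar> = \<bar>x\<bar> ^ k" by (simp add: power_abs)
  also have "\<dots> \<le> \<bar>x\<bar> ^ (2*n)" using False k by (intro power_increasing) auto
  also have "\<dots> = x ^ (2*n)" by (simp add: power_mult power_abs)
  finally show ?thesis by simp
qed

lemma mu_bound: "k \<le> 2*n \<Longrightarrow> \<bar>mu k\<bar> \<le> 1 + mu (2*n)"
proof -
  interpret prob_space "entry_dist p" by (rule p_prob)
  assume k: "k \<le> 2*n"
  have "\<bar>mu k\<bar> \<le> (\<integral>x. \<bar>x ^ k\<bar> \<partial>entry_dist p)"
    unfolding mu_def using integral_norm_bound[of "entry_dist p" "\<lambda>x. x ^ k"] by simp
  also have "\<dots> \<le> (\<integral>x. 1 + x ^ (2*n) \<partial>entry_dist p)"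
  proof (rule integral_mono)
    show "integrable (entry_dist p) (\<lambda>x. \<bar>x ^ k\<bar>)" using integrable_pow by (rule integrable_abs)
    show "integrable (entry_dist p) (\<lambda>x. 1 + x ^ (2*n))" using integrable_pow by simp
    fix x :: real show "\<bar>x ^ k\<bar> \<le> 1 + x ^ (2*n)" using abs_pow_le[of k n x] k by simp
  qed
  also have "\<dots> = 1 + mu (2*n)"
    using integrable_pow by (simp add: mu_def prob_space)
  finally show ?thesis .
qed

definition mu' :: "nat \<Rightarrow> nat \<Rightarrow> real" where "mu' d k = (if d = 0 then 0 ^ k else mu k)"

lemma prod_split0:
  fixes F :: "nat \<Rightarrow> real"
  assumes "N \<ge> 1"
  shows "(\<Prod>d<N. F d) = F 0 * (\<Prod>d\<in>{1..<N}. F d)"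
proof -
  have "(\<Prod>d<N. F d) = (\<Prod>d\<in>{0..<N}. F d)" by (simp add: atLeast0LessThan)
  also have "\<dots> = F 0 * (\<Prod>d\<in>{Suc 0..<N}. F d)" using assms by (subst prod.atLeast_Suc_lessThan) auto
  finally show ?thesis by simp
qed

lemma E_prod:
  assumes N: "N \<ge> 1"
  shows "integrable (entries_space p N) (\<lambda>b. \<Prod>d<N. bb b d ^ n d)"
    and "(\<integral>b. (\<Prod>d<N. bb b d ^ n d) \<partial>entries_space p N) = (\<Prod>d<N. mu' d (n d))"
proof -
  interpret product_sigma_finite "\<lambda>_. entry_dist p"
    unfolding product_sigma_finite_def using prob_space_imp_sigma_finite[OF p_prob] by simp
  have split: "(\<Prod>d<N. bb b d ^ n d) = 0 ^ n 0 * (\<Prod>d\<in>{1..<N}. b d ^ n d)" for b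
    using prod_split0[OF N, of "\<lambda>d. bb b d ^ n d"] by (simp add: bb_def)
  have int: "integrable (entries_space p N) (\<lambda>b. \<Prod>d\<in>{1..<N}. b d ^ n d)"
    unfolding entries_space_def
    by (rule product_integrable_prod) (auto intro: integrable_pow)
  have eq: "(\<integral>b. (\<Prod>d\<in>{1..<N}. b d ^ n d) \<partial>entries_space p N) = (\<Prod>d\<in>{1..<N}. mu (n d))"
    unfolding entries_space_def mu_def
    by (rule product_integral_prod) (auto intro: integrable_pow)
  show "integrable (entries_space p N) (\<lambda>b. \<Prod>d<N. bb b d ^ n d)"
    unfolding split using int by simp
  have "(\<integral>b. (\<Prod>d<N. bb b d ^ n d) \<partial>entries_space p N) = 0 ^ n 0 * (\<Prod>d\<in>{1..<N}. mu (n d))"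
    unfolding split eq[symmetric] by simp
  also have "\<dots> = (\<Prod>d<N. mu' d (n d))"
    using prod_split0[OF N, of "\<lambda>d. mu' d (n d)"] by (simp add: mu'_def)
  finally show "(\<integral>b. (\<Prod>d<N. bb b d ^ n d) \<partial>entries_space p N) = (\<Prod>d<N. mu' d (n d))" .
qed

definition LL :: "nat \<Rightarrow> real" where "LL m = 1 + mu (2*m)"

lemma mu_even_nonneg: "0 \<le> mu (2*m)"
  unfolding mu_def by (intro integral_nonneg_AE) (simp add: power_mult)

lemma LL_ge1: "1 \<le> LL m"
  using mu_even_nonneg[of m] by (simp add: LL_def)

lemma mu'_bound:
  assumes "k \<le> 2*m"
  shows "\<bar>mu' d k\<bar> \<le> LL m ^ k"
proof (cases "k = 0")
  case True then show ?thesis by (simp add: mu'_def mu0)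
next
  case False
  have "\<bar>mu' d k\<bar> \<le> LL m"
    using mu_bound[OF assms] LL_ge1[of m] False by (auto simp: mu'_def LL_def power_0_left)
  also have "\<dots> \<le> LL m ^ k" using LL_ge1[of m] False by (simp add: power_increasing[of 1 k, simplified])
  finally show ?thesis .
qed

lemma prod_mu'_bound:
  assumes "\<And>d. d < N \<Longrightarrow> n d \<le> 2*m"
  shows "\<bar>\<Prod>d<N. mu' d (n d)\<bar> \<le> LL m ^ (\<Sum>d<N. n d)"
proof -
  have "\<bar>\<Prod>d<N. mu' d (n d)\<bar> = (\<Prod>d<N. \<bar>mu' d (n d)\<bar>)" by (rule abs_prod)
  also have "\<dots> \<le> (\<Prod>d<N. LL m ^ n d)"
    by (rule prod_mono) (use mu'_bound assms in auto)
  also have "\<dots> = LL m ^ (\<Sum>d<N. n d)" by (simp add: power_sum)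
  finally show ?thesis .
qed

definition cov :: "nat \<Rightarrow> nat \<Rightarrow> (nat \<Rightarrow> nat) \<Rightarrow> (nat \<Rightarrow> nat) \<Rightarrow> real" where
  "cov N m u v = (\<Prod>d<N. mu' d (cnt m u d + cnt m v d)) - (\<Prod>d<N. mu' d (cnt m u d)) * (\<Prod>d<N. mu' d (cnt m v d))"

lemma cnt_big: "u \<in> W N m \<Longrightarrow> N \<le> d \<Longrightarrow> cnt m u d = 0"
  unfolding cnt_def using ee_less[of u N m] by fastforce

lemma cnt_le: "u \<in> W N m \<Longrightarrow> cnt m u d \<le> m"
  unfolding cnt_def using card_mono[of "{..<m}" "{t\<in>{..<m}. ee m u t = d}"] by auto

lemma mu'_1: "mu' d (Suc 0) = 0"
  using mu1 by (simp add: mu'_def)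

lemma mu'_0: "mu' d 0 = 1"
  by (simp add: mu'_def mu0)

lemma cov_zero:
  assumes u: "u \<in> W N m" and v: "v \<in> W N m" and ng: "\<not> good m u v"
  shows "cov N m u v = 0"
proof (cases "\<exists>d. cnt m u d + cnt m v d = 1")
  case True
  then obtain d where d: "cnt m u d + cnt m v d = 1" by blast
  have dN: "d < N"
  proof (rule ccontr)
    assume "\<not> d < N"
    then show False using d cnt_big[OF u, of d] cnt_big[OF v, of d] by simp
  qed
  have z1: "(\<Prod>d<N. mu' d (cnt m u d + cnt m v d)) = 0"
    using dN d by (intro prod_zero) (auto intro!: bexI[of _ d] simp: mu'_1)
  have z2: "(\<Prod>d<N. mu' d (cnt m u d)) * (\<Prod>d<N. mu' d (cnt m v d)) = 0"
  proof (cases "cnt m u d = 1")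
    case True
    then have "(\<Prod>d<N. mu' d (cnt m u d)) = 0"
      using dN by (intro prod_zero) (auto intro!: bexI[of _ d] simp: mu'_1)
    then show ?thesis by simp
  next
    case False
    then have "cnt m v d = 1" using d by simp
    then have "(\<Prod>d<N. mu' d (cnt m v d)) = 0"
      using dN by (intro prod_zero) (auto intro!: bexI[of _ d] simp: mu'_1)
    then show ?thesis by simp
  qed
  show ?thesis unfolding cov_def z1 z2 by simp
next
  case False
  then have dis: "\<And>d. cnt m u d = 0 \<or> cnt m v d = 0" using ng unfolding good_def by auto
  have "(\<Prod>d<N. mu' d (cnt m u d + cnt m v d)) = (\<Prod>d<N. mu' d (cnt m u d) * mu' d (cnt m v d))"
  proof (rule prod.cong[OF refl])
    fix d show "mu' d (cnt m u d + cnt m v d) = mu' d (cnt m u d) * mu' d (cnt m v d)"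
      using dis[of d] by (auto simp: mu'_0)
  qed
  then show ?thesis unfolding cov_def by (simp add: prod.distrib)
qed

lemma cov_bound:
  assumes u: "u \<in> W N m" and v: "v \<in> W N m"
  shows "\<bar>cov N m u v\<bar> \<le> 2 * LL m ^ (2*m)"
proof -
  have b1: "\<bar>\<Prod>d<N. mu' d (cnt m u d + cnt m v d)\<bar> \<le> LL m ^ (2*m)"
  proof -
    have "\<bar>\<Prod>d<N. mu' d (cnt m u d + cnt m v d)\<bar> \<le> LL m ^ (\<Sum>d<N. cnt m u d + cnt m v d)"
      by (rule prod_mu'_bound) (use cnt_le[OF u] cnt_le[OF v] in \<open>simp add: add_mono mult_2\<close>)
    also have "(\<Sum>d<N. cnt m u d + cnt m v d) = 2*m"
      using sum_cnt[OF u] sum_cnt[OF v] by (simp add: sum.distrib)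
    finally show ?thesis .
  qed
  have b2: "\<bar>\<Prod>d<N. mu' d (cnt m w d)\<bar> \<le> LL m ^ m" if w: "w \<in> W N m" for w
  proof -
    have "\<bar>\<Prod>d<N. mu' d (cnt m w d)\<bar> \<le> LL m ^ (\<Sum>d<N. cnt m w d)"
    proof (rule prod_mu'_bound)
      fix d :: nat show "cnt m w d \<le> 2*m" using cnt_le[OF w, of d] by linarith
    qed
    also have "(\<Sum>d<N. cnt m w d) = m" using sum_cnt[OF w] .
    finally show ?thesis .
  qed
  have "\<bar>(\<Prod>d<N. mu' d (cnt m u d)) * (\<Prod>d<N. mu' d (cnt m v d))\<bar> \<le> LL m ^ m * LL m ^ m"
    unfolding abs_mult by (rule mult_mono) (use b2[OF u] b2[OF v] LL_ge1[of m] in auto)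
  also have "\<dots> = LL m ^ (2*m)" by (simp add: power_add[symmetric] mult_2)
  finally have b3: "\<bar>(\<Prod>d<N. mu' d (cnt m u d)) * (\<Prod>d<N. mu' d (cnt m v d))\<bar> \<le> LL m ^ (2*m)" .
  show ?thesis unfolding cov_def using b1 b3 by linarith
qed

lemma XX_int:
  assumes N: "N \<ge> 1" and u: "u \<in> W N m"
  shows "integrable (entries_space p N) (\<lambda>b. XX m b u)"
    and "(\<integral>b. XX m b u \<partial>entries_space p N) = (\<Prod>d<N. mu' d (cnt m u d))"
proof -
  have eq: "(\<lambda>b. XX m b u) = (\<lambda>b. \<Prod>d<N. bb b d ^ cnt m u d)"
    by (rule ext) (rule XX_cnt[OF u])
  show "integrable (entries_space p N) (\<lambda>b. XX m b u)"
    unfolding eq by (rule E_prod(1)[OF N])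
  show "(\<integral>b. XX m b u \<partial>entries_space p N) = (\<Prod>d<N. mu' d (cnt m u d))"
    unfolding eq by (rule E_prod(2)[OF N])
qed

lemma XX2_int:
  assumes N: "N \<ge> 1" and u: "u \<in> W N m" and v: "v \<in> W N m"
  shows "integrable (entries_space p N) (\<lambda>b. XX m b u * XX m b v)"
    and "(\<integral>b. XX m b u * XX m b v \<partial>entries_space p N) = (\<Prod>d<N. mu' d (cnt m u d + cnt m v d))"
proof -
  have eq: "(\<lambda>b. XX m b u * XX m b v) = (\<lambda>b. \<Prod>d<N. bb b d ^ (cnt m u d + cnt m v d))"
    by (rule ext) (rule XX_mult_cnt[OF u v])
  show "integrable (entries_space p N) (\<lambda>b. XX m b u * XX m b v)"
    unfolding eq by (rule E_prod(1)[OF N])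
  show "(\<integral>b. XX m b u * XX m b v \<partial>entries_space p N) = (\<Prod>d<N. mu' d (cnt m u d + cnt m v d))"
    unfolding eq by (rule E_prod(2)[OF N])
qed

lemma var_T:
  assumes N: "N \<ge> 1"
  shows "(\<integral>b. (\<Sum>u\<in>W N m. XX m b u)\<^sup>2 \<partial>entries_space p N)
       - (\<integral>b. (\<Sum>u\<in>W N m. XX m b u) \<partial>entries_space p N)\<^sup>2
       = (\<Sum>u\<in>W N m. \<Sum>v\<in>W N m. cov N m u v)"
proof -
  let ?M = "entries_space p N"
  have fin: "finite (W N m)" by (simp add: W_def finite_PiE)
  have sq: "(\<Sum>u\<in>W N m. XX m b u)\<^sup>2 = (\<Sum>u\<in>W N m. \<Sum>v\<in>W N m. XX m b u * XX m b v)" for b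
    by (simp add: power2_eq_square sum_product)
  have e2: "(\<integral>b. (\<Sum>u\<in>W N m. XX m b u)\<^sup>2 \<partial>?M)
     = (\<Sum>u\<in>W N m. \<Sum>v\<in>W N m. \<Prod>d<N. mu' d (cnt m u d + cnt m v d))"
    unfolding sq
    by (simp add: integral_sum integrable_sum XX2_int[OF N])
  have e1: "(\<integral>b. (\<Sum>u\<in>W N m. XX m b u) \<partial>?M) = (\<Sum>u\<in>W N m. \<Prod>d<N. mu' d (cnt m u d))"
    by (simp add: integral_sum XX_int[OF N])
  have e1sq: "(\<integral>b. (\<Sum>u\<in>W N m. XX m b u) \<partial>?M)\<^sup>2
     = (\<Sum>u\<in>W N m. \<Sum>v\<in>W N m. (\<Prod>d<N. mu' d (cnt m u d)) * (\<Prod>d<N. mu' d (cnt m v d)))"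
    unfolding e1 by (simp add: power2_eq_square sum_product)
  show ?thesis
    unfolding e2 e1sq cov_def by (simp add: sum_subtractf)
qed

lemma sum_cov_bound:
  assumes m: "m \<ge> 1" and N: "N \<ge> 1"
  shows "\<bar>\<Sum>u\<in>W N m. \<Sum>v\<in>W N m. cov N m u v\<bar> \<le> 2 * LL m ^ (2*m) * real (card (GG N m))"
proof -
  have "(\<Sum>u\<in>W N m. \<Sum>v\<in>W N m. cov N m u v) = (\<Sum>(u,v)\<in>W N m \<times> W N m. cov N m u v)"
    by (rule sum.cartesian_product)
  also have "\<dots> = (\<Sum>(u,v)\<in>GG N m. cov N m u v)"
  proof (rule sum.mono_neutral_right)
    show "finite (W N m \<times> W N m)" using finite_W by simp
    show "GG N m \<subseteq> W N m \<times> W N m" unfolding GG_def by auto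
    show "\<forall>i\<in>W N m \<times> W N m - GG N m. (case i of (u, v) \<Rightarrow> cov N m u v) = 0"
      using cov_zero unfolding GG_def by auto
  qed
  finally have eq: "(\<Sum>u\<in>W N m. \<Sum>v\<in>W N m. cov N m u v) = (\<Sum>(u,v)\<in>GG N m. cov N m u v)" .
  have "\<bar>\<Sum>(u,v)\<in>GG N m. cov N m u v\<bar> \<le> (\<Sum>(u,v)\<in>GG N m. \<bar>cov N m u v\<bar>)"
    by (rule order.trans[OF sum_abs]) (simp add: case_prod_beta)
  also have "\<dots> \<le> (\<Sum>(u,v)\<in>GG N m. 2 * LL m ^ (2*m))"
    by (rule sum_mono) (use cov_bound in \<open>auto simp: GG_def\<close>)
  also have "\<dots> = 2 * LL m ^ (2*m) * real (card (GG N m))" by simp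
  finally show ?thesis unfolding eq .
qed

lemma var_moment_bound:
  assumes m: "m \<ge> 1" and N: "N \<ge> 1"
  shows "\<bar>expect_entries p N (\<lambda>b. (moment_AN m N b)\<^sup>2) - (expect_entries p N (moment_AN m N))\<^sup>2\<bar>
     \<le> 2 * LL m ^ (2*m) * real (Suc m * Suc m * card (Pats m)) / real N"
proof -
  let ?M = "entries_space p N"
  define T where "T b = (\<Sum>u\<in>W N m. XX m b u)" for b
  define c where "c = real N powr (real m / 2 + 1)"
  have mom: "moment_AN m N b = T b / c" for b
    unfolding moment_AN_def T_def c_def trace_walk[OF m] ..
  have Npos: "0 < real N" using N by simp
  have c2: "c\<^sup>2 = real N ^ (m + 2)"
  proof -
    have "c\<^sup>2 = real N powr (real m / 2 + 1 + (real m / 2 + 1))"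
      unfolding c_def power2_eq_square by (rule powr_add[symmetric])
    also have "real m / 2 + 1 + (real m / 2 + 1) = real (m + 2)" by simp
    also have "real N powr real (m + 2) = real N ^ (m + 2)" using Npos by (rule powr_realpow)
    finally show ?thesis .
  qed
  have e2: "expect_entries p N (\<lambda>b. (moment_AN m N b)\<^sup>2) = (\<integral>b. (T b)\<^sup>2 \<partial>?M) / c\<^sup>2"
    unfolding expect_entries_def mom by (simp add: power_divide)
  have e1: "expect_entries p N (moment_AN m N) = (\<integral>b. T b \<partial>?M) / c"
    unfolding expect_entries_def mom by simp
  have "expect_entries p N (\<lambda>b. (moment_AN m N b)\<^sup>2) - (expect_entries p N (moment_AN m N))\<^sup>2
      = ((\<integral>b. (T b)\<^sup>2 \<partial>?M) - (\<integral>b. T b \<partial>?M)\<^sup>2) / c\<^sup>2"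
    unfolding e2 e1 by (simp add: power_divide diff_divide_distrib)
  also have "\<dots> = (\<Sum>u\<in>W N m. \<Sum>v\<in>W N m. cov N m u v) / real N ^ (m + 2)"
    unfolding c2 T_def var_T[OF N] ..
  finally have eq: "expect_entries p N (\<lambda>b. (moment_AN m N b)\<^sup>2) - (expect_entries p N (moment_AN m N))\<^sup>2
      = (\<Sum>u\<in>W N m. \<Sum>v\<in>W N m. cov N m u v) / real N ^ (m + 2)" .
  have "\<bar>\<Sum>u\<in>W N m. \<Sum>v\<in>W N m. cov N m u v\<bar> \<le> 2 * LL m ^ (2*m) * real (card (GG N m))"
    by (rule sum_cov_bound[OF m N])
  also have "\<dots> \<le> 2 * LL m ^ (2*m) * real (Suc m * Suc m * (N ^ Suc m * card (Pats m)))"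
  proof (rule mult_left_mono)
    show "real (card (GG N m)) \<le> real (Suc m * Suc m * (N ^ Suc m * card (Pats m)))"
      using card_GG[OF m, of N] by linarith
    show "0 \<le> 2 * LL m ^ (2*m)" using LL_ge1[of m] by simp
  qed
  also have "\<dots> = 2 * LL m ^ (2*m) * real (Suc m * Suc m * card (Pats m)) / real N * real N ^ (m + 2)"
  proof -
    have r: "real (Suc m * Suc m * (N ^ Suc m * card (Pats m))) = real (Suc m * Suc m * card (Pats m)) * real N ^ Suc m"
      by (simp only: of_nat_mult of_nat_power mult_ac)
    have q: "real N ^ (m + 2) = real N ^ Suc m * real N" by simp
    show ?thesis unfolding r q using Npos by (simp add: field_simps)
  qed
  finally have bnd: "\<bar>\<Sum>u\<in>W N m. \<Sum>v\<in>W N m. cov N m u v\<bar> \<le> 2 * LL m ^ (2*m) * real (Suc m * Suc m * card (Pats m)) / real N * real N ^ (m + 2)" .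
  have pos: "0 < real N ^ (m + 2)" using Npos by simp
  have "\<bar>(\<Sum>u\<in>W N m. \<Sum>v\<in>W N m. cov N m u v) / real N ^ (m + 2)\<bar> = \<bar>\<Sum>u\<in>W N m. \<Sum>v\<in>W N m. cov N m u v\<bar> / real N ^ (m + 2)"
    using pos by (simp add: abs_divide)
  also have "\<dots> \<le> 2 * LL m ^ (2*m) * real (Suc m * Suc m * card (Pats m)) / real N"
    using bnd pos by (simp only: pos_divide_le_eq)
  finally show ?thesis unfolding eq .
qed

lemma moment0: "N \<ge> 1 \<Longrightarrow> moment_AN 0 N b = 1"
  by (simp add: moment_AN_def mat_trace_def toeplitz_mat_def)

lemma bound_exists: "\<exists>C. \<forall>N\<ge>1. \<bar>expect_entries p N (\<lambda>b. (moment_AN m N b)\<^sup>2) - (expect_entries p N (moment_AN m N))\<^sup>2\<bar> \<le> C / real N"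
proof (cases "m = 0")
  case True
  show ?thesis
  proof (intro exI[of _ 0] allI impI)
    fix N :: nat assume N: "N \<ge> 1"
    interpret P: prob_space "entries_space p N"
      unfolding entries_space_def by (rule prob_space_PiM) (rule p_prob)
    have "expect_entries p N (\<lambda>b. (moment_AN m N b)\<^sup>2) = 1"
      unfolding expect_entries_def True moment0[OF N] by (simp add: P.prob_space)
    moreover have "expect_entries p N (moment_AN m N) = 1"
      unfolding expect_entries_def True moment0[OF N] by (simp add: P.prob_space)
    ultimately show "\<bar>expect_entries p N (\<lambda>b. (moment_AN m N b)\<^sup>2) - (expect_entries p N (moment_AN m N))\<^sup>2\<bar> \<le> 0 / real N"
      by simp
  qed
next
  case False
  then have m: "m \<ge> 1" by simp
  show ?thesis using var_moment_bound[OF m] by blast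
qed

end

theorem mainTheorem10:
  fixes p :: "real \<Rightarrow> real" and m :: nat
  assumes p_meas: "p \<in> borel_measurable lborel"
    and p_nonneg: "\<And>x. 0 \<le> p x"
    and p_prob: "prob_space (entry_dist p)"
    and p_moments: "\<And>k::nat. integrable lborel (\<lambda>x. x ^ k * p x)"
    and p_mean: "(\<integral>x. x * p x \<partial>lborel) = 0"
    and p_var: "(\<integral>x. x\<^sup>2 * p x \<partial>lborel) = 1"
  shows "(\<lambda>N. expect_entries p N (\<lambda>b. (moment_AN m N b)\<^sup>2)
              - (expect_entries p N (moment_AN m N))\<^sup>2) \<in> O(\<lambda>N. 1 / real N)
     \<and> ((\<lambda>N. expect_entries p N (\<lambda>b. (moment_AN m N b)\<^sup>2)
              - (expect_entries p N (moment_AN m N))\<^sup>2) \<longlonglongrightarrow> 0)"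
proof -
  interpret ent p by (rule ent.intro[OF p_meas p_nonneg p_prob p_moments p_mean])
  define f where "f N = expect_entries p N (\<lambda>b. (moment_AN m N b)\<^sup>2) - (expect_entries p N (moment_AN m N))\<^sup>2" for N
  obtain C where C: "\<And>N. N \<ge> 1 \<Longrightarrow> \<bar>f N\<bar> \<le> C / real N"
    using bound_exists[of m] unfolding f_def by blast
  have ev: "eventually (\<lambda>N. norm (f N) \<le> C / real N) sequentially"
    using eventually_ge_at_top[of "1::nat"] by eventually_elim (use C in simp)
  have "f \<in> O(\<lambda>N. 1 / real N)"
  proof (rule bigoI[where c = C])
    show "eventually (\<lambda>N. norm (f N) \<le> C * norm (1 / real N)) sequentially"
      using ev by eventually_elim simp
  qed
  moreover have "f \<longlonglongrightarrow> 0"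
    by (rule Lim_null_comparison[OF ev lim_const_over_n])
  ultimately show ?thesis unfolding f_def by simp
qed

end
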